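(* Let $\mathbf A$ be an $L\times K$ binary matrix with full row rank, and consider any computing scheme that computes $\mathbf r=\mathbf s\mathbf A$ over $\mathbb F_2$ using a circuit built from gates of Gate Model I, each failing independently with error probability $\epsilon$, with maximum fan-in $D$. If the scheme achieves block error probability $P_e^{\text{blk}}=\Pr(\hat{\mathbf r}\ne\mathbf r)<p_{\text{tar}}$, then the number of operations per output bit satisfies $$\mathscr N_{\text{per-bit}}\ge\frac{L\log(1/p_{\text{tar}})}{KD\log(D/\epsilon)}=\Omega\!\left(\frac{L\log(1/p_{\text{tar}})}{K\log(1/\epsilon)}\right).$$
   Context: Gate Model I: each gate computes a deterministic Boolean function $g$ of $d_g\le D$ inputs and outputs $g(u_1,\dots,u_{d_g})\oplus z_g$ with $z_g\sim\mathrm{Bernoulli}(\epsilon)$, $\epsilon<1/2$, independently across gates and across uses. A noisy circuit has binary inputs $s_1,\dots,s_L$, such gates, and noiseless registers and wires; gate inputs can be circuit inputs, gate outputs or register outputs. The computation proceeds in a predetermined number of stages; in each stage some gates are activated and some registers updated, and the outputs are finally stored in registers. One operation is one activation of one gate; $\mathscr N_{\text{per-bit}}$ is the total number of operations divided by $K$. $\hat{\mathbf r}$ is the computed output. *)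

theory Defs
  imports "HOL-Probability.Probability"
begin

text \<open>Noisy circuits of Gate Model I, unrolled as a straight-line program of gate
  activations (operations).  Noiseless registers and wires only copy values, so every
  value read by a gate is a circuit input, a constant, or the output of an earlier
  activation.\<close>

datatype src = Inp nat | GOut nat | Cst bool

type_synonym operation = "(bool list \<Rightarrow> bool) \<times> src list"

fun valid_src :: "nat \<Rightarrow> nat \<Rightarrow> src \<Rightarrow> bool" where
  "valid_src L j (Inp i) = (i < L)"
| "valid_src L j (GOut m) = (m < j)"
| "valid_src L j (Cst b) = True"

fun valid_out :: "nat \<Rightarrow> src \<Rightarrow> bool" where
  "valid_out N (Inp i) = False"
| "valid_out N (GOut m) = (m < N)"
| "valid_out N (Cst b) = True"

definition wf_circuit :: "nat \<Rightarrow> nat \<Rightarrow> nat \<Rightarrow> operation list \<Rightarrow> src list \<Rightarrow> bool" where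
  "wf_circuit L K D ops outs \<longleftrightarrow>
     (\<forall>j < length ops. length (snd (ops ! j)) \<le> D \<and>
                        (\<forall>x \<in> set (snd (ops ! j)). valid_src L j x)) \<and>
     length outs = K \<and> (\<forall>x \<in> set outs. valid_out (length ops) x)"

fun eval_src :: "(nat \<Rightarrow> bool) \<Rightarrow> bool list \<Rightarrow> src \<Rightarrow> bool" where
  "eval_src s vals (Inp i) = s i"
| "eval_src s vals (GOut m) = vals ! m"
| "eval_src s vals (Cst b) = b"

definition step :: "(nat \<Rightarrow> bool) \<Rightarrow> (nat \<Rightarrow> bool) \<Rightarrow> bool list \<Rightarrow> operation \<Rightarrow> bool list" where
  "step s z vals op = vals @ [fst op (map (eval_src s vals) (snd op)) \<noteq> z (length vals)]"

definition run_ops :: "(nat \<Rightarrow> bool) \<Rightarrow> (nat \<Rightarrow> bool) \<Rightarrow> operation list \<Rightarrow> bool list" where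
  "run_ops s z ops = foldl (step s z) [] ops"

definition circuit_output ::
  "operation list \<Rightarrow> src list \<Rightarrow> (nat \<Rightarrow> bool) \<Rightarrow> (nat \<Rightarrow> bool) \<Rightarrow> bool list" where
  "circuit_output ops outs s z = map (eval_src s (run_ops s z ops)) outs"

definition noise :: "nat \<Rightarrow> real \<Rightarrow> (nat \<Rightarrow> bool) pmf" where
  "noise N eps = Pi_pmf {..<N} False (\<lambda>_. bernoulli_pmf eps)"

text \<open>r = s A over F_2 (A given by its entries A l k, l < L, k < K).\<close>
definition f2_vecmat :: "nat \<Rightarrow> nat \<Rightarrow> (nat \<Rightarrow> nat \<Rightarrow> bool) \<Rightarrow> (nat \<Rightarrow> bool) \<Rightarrow> bool list" where
  "f2_vecmat L K A s = map (\<lambda>k. odd (card {l. l < L \<and> s l \<and> A l k})) [0..<K]"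

text \<open>Full row rank over F_2: the L rows are linearly independent, i.e. no nontrivial
  F_2-combination (= sum over a nonempty set of rows) vanishes.\<close>
definition f2_full_row_rank :: "nat \<Rightarrow> nat \<Rightarrow> (nat \<Rightarrow> nat \<Rightarrow> bool) \<Rightarrow> bool" where
  "f2_full_row_rank L K A \<longleftrightarrow>
     (\<forall>S \<subseteq> {..<L}. S \<noteq> {} \<longrightarrow> (\<exists>k < K. odd (card {l \<in> S. A l k})))"

definition block_error :: "real \<Rightarrow> nat \<Rightarrow> nat \<Rightarrow> (nat \<Rightarrow> nat \<Rightarrow> bool) \<Rightarrow>
    operation list \<Rightarrow> src list \<Rightarrow> (nat \<Rightarrow> bool) \<Rightarrow> real" where
  "block_error eps L K A ops outs s =
     measure_pmf.prob (noise (length ops) eps)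
       {z. circuit_output ops outs s z \<noteq> f2_vecmat L K A s}"

end

theory Submission imports Defs begin

lemma length_run: "length (run_ops s z ops) = length ops"
  by (induction ops rule: rev_induct) (auto simp: run_ops_def step_def)

lemma run_snoc: "run_ops s z (ops @ [op1]) = run_ops s z ops @ [fst op1 (map (eval_src s (run_ops s z ops)) (snd op1)) \<noteq> z (length ops)]"
  by (simp add: run_ops_def step_def length_run[unfolded run_ops_def])

lemma nth_run: "j < length ops \<Longrightarrow> run_ops s z ops ! j =
   (fst (ops!j) (map (eval_src s (take j (run_ops s z ops))) (snd (ops!j))) \<noteq> z j)"
proof (induction ops rule: rev_induct)
  case Nil then show ?case by simp
next
  case (snoc op1 ops)
  show ?case
  proof (cases "j < length ops")
    case True
    then show ?thesis using snoc by (simp add: run_snoc nth_append length_run)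
  next
    case False
    then have "j = length ops" using snoc by simp
    then show ?thesis by (simp add: run_snoc nth_append length_run)
  qed
qed

definition gv :: "operation list \<Rightarrow> (nat \<Rightarrow> bool) \<Rightarrow> bool list \<Rightarrow> nat \<Rightarrow> bool" where
  "gv ops s v j = fst (ops!j) (map (eval_src s v) (snd (ops!j)))"

definition Zf :: "operation list \<Rightarrow> (nat \<Rightarrow> bool) \<Rightarrow> bool list \<Rightarrow> nat \<Rightarrow> bool" where
  "Zf ops s v = (\<lambda>j. if j < length ops then (v!j \<noteq> gv ops s v j) else False)"

definition wf_ops :: "nat \<Rightarrow> operation list \<Rightarrow> bool" where
  "wf_ops L ops \<longleftrightarrow> (\<forall>j < length ops. \<forall>x \<in> set (snd (ops ! j)). valid_src L j x)"

lemma eval_take: "valid_src L j x \<Longrightarrow> eval_src s (take j v) x = eval_src s v x"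
  by (cases x) auto

lemma map_take: "wf_ops L ops \<Longrightarrow> j < length ops \<Longrightarrow>
   map (eval_src s (take j v)) (snd (ops!j)) = map (eval_src s v) (snd (ops!j))"
proof (rule map_cong[OF refl])
  fix x assume "wf_ops L ops" "j < length ops" "x \<in> set (snd (ops!j))"
  then have "valid_src L j x" unfolding wf_ops_def by blast
  then show "eval_src s (take j v) x = eval_src s v x" by (rule eval_take)
qed

lemma run_char: "wf_ops L ops \<Longrightarrow> j < length ops \<Longrightarrow>
   run_ops s z ops ! j = (gv ops s (run_ops s z ops) j \<noteq> z j)"
  using nth_run[of j ops s z] map_take[of L ops j s] unfolding gv_def by simp

lemma run_unique:
  assumes wf: "wf_ops L ops" and len: "length v = length ops"
    and eq: "\<forall>j < length ops. v!j = (gv ops s v j \<noteq> z j)"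
  shows "run_ops s z ops = v"
proof -
  let ?w = "run_ops s z ops"
  have "\<forall>n \<le> length ops. take n v = take n ?w"
  proof (intro allI impI)
    fix n assume "n \<le> length ops"
    then show "take n v = take n ?w"
    proof (induction n)
      case 0 then show ?case by simp
    next
      case (Suc n)
      then have IH: "take n v = take n ?w" and nl: "n < length ops" by auto
      have "v!n = (gv ops s v n \<noteq> z n)" using eq nl by auto
      also have "gv ops s v n = fst (ops!n) (map (eval_src s (take n v)) (snd (ops!n)))"
        by (simp only: gv_def map_take[OF wf nl])
      also have "\<dots> = fst (ops!n) (map (eval_src s (take n ?w)) (snd (ops!n)))" using IH by simp
      finally have "v!n = ?w!n" using nth_run[OF nl, of s z] by simp
      then show ?case using IH nl len length_run[of s z ops]
        by (simp add: take_Suc_conv_app_nth)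
    qed
  qed
  then have "take (length ops) v = take (length ops) ?w" by simp
  then show ?thesis using len length_run[of s z ops] by simp
qed

lemma run_Zf: "wf_ops L ops \<Longrightarrow> length v = length ops \<Longrightarrow> run_ops s (Zf ops s v) ops = v"
proof (rule run_unique[of L])
  show "\<forall>j<length ops. v ! j = (gv ops s v j \<noteq> Zf ops s v j)"
  proof (intro allI impI)
    fix j assume "j < length ops"
    then show "v ! j = (gv ops s v j \<noteq> Zf ops s v j)" by (simp add: Zf_def) argo
  qed
qed

lemma Zf_run: "wf_ops L ops \<Longrightarrow> \<forall>j. j \<ge> length ops \<longrightarrow> \<not> z j \<Longrightarrow> Zf ops s (run_ops s z ops) = z"
proof
  fix j
  assume wf: "wf_ops L ops" and z: "\<forall>j. j \<ge> length ops \<longrightarrow> \<not> z j"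
  show "Zf ops s (run_ops s z ops) j = z j"
  proof (cases "j < length ops")
    case True
    then show ?thesis using run_char[OF wf True, of s z] by (simp add: Zf_def) argo
  next
    case False
    then show ?thesis using z by (simp add: Zf_def)
  qed
qed


definition outv :: "src list \<Rightarrow> bool list \<Rightarrow> bool list" where
  "outv outs v = map (eval_src (\<lambda>_. False) v) outs"

lemma co_outv:
  assumes "\<forall>x\<in>set outs. valid_out (length ops) x"
  shows "circuit_output ops outs s z = outv outs (run_ops s z ops)"
  unfolding circuit_output_def outv_def
proof (rule map_cong[OF refl])
  fix x assume "x \<in> set outs"
  then have "valid_out (length ops) x" using assms by blast
  then show "eval_src s (run_ops s z ops) x = eval_src (\<lambda>_. False) (run_ops s z ops) x"
    by (cases x) auto
qed

lemma finite_lists: "finite {v :: bool list. length v = n}"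
  using finite_lists_length_eq[of "UNIV :: bool set" n] by simp

lemma card_lists: "card {v :: bool list. length v = n} = 2 ^ n"
  using card_lists_length_eq[of "UNIV :: bool set" n] by simp

lemma prob_sum:
  assumes wf: "wf_ops L ops" and vo: "\<forall>x\<in>set outs. valid_out (length ops) x"
  shows "measure_pmf.prob (noise (length ops) eps) {z. circuit_output ops outs s z = w} =
    (\<Sum>v \<in> {v. length v = length ops \<and> outv outs v = w}. pmf (noise (length ops) eps) (Zf ops s v))"
proof -
  define N where "N = length ops"
  define M where "M = noise N eps"
  define E where "E = {z. circuit_output ops outs s z = w}"
  define SN where "SN = {z :: nat \<Rightarrow> bool. \<forall>j. j \<notin> {..<N} \<longrightarrow> z j = False}"
  define Vw where "Vw = {v. length v = N \<and> outv outs v = w}"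
  have bij: "bij_betw (Zf ops s) Vw (E \<inter> SN)"
  proof (rule bij_betw_byWitness[where f'="\<lambda>z. run_ops s z ops"])
    show "\<forall>a\<in>Vw. run_ops s (Zf ops s a) ops = a"
      using run_Zf[OF wf] by (auto simp: Vw_def N_def)
    show "\<forall>a'\<in>E \<inter> SN. Zf ops s (run_ops s a' ops) = a'"
      using Zf_run[OF wf] by (auto simp: SN_def N_def)
    show "Zf ops s ` Vw \<subseteq> E \<inter> SN"
    proof
      fix z assume "z \<in> Zf ops s ` Vw"
      then obtain v where v: "v \<in> Vw" "z = Zf ops s v" by blast
      have "circuit_output ops outs s z = outv outs v"
        using co_outv[OF vo] run_Zf[OF wf] v by (auto simp: Vw_def N_def)
      then have "z \<in> E" using v by (simp add: E_def Vw_def)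
      moreover have "z \<in> SN" using v by (simp add: SN_def Zf_def N_def)
      ultimately show "z \<in> E \<inter> SN" by blast
    qed
    show "(\<lambda>z. run_ops s z ops) ` (E \<inter> SN) \<subseteq> Vw"
      using co_outv[OF vo] by (auto simp: E_def Vw_def N_def length_run)
  qed
  have finV: "finite Vw" by (rule finite_subset[OF _ finite_lists[of N]]) (auto simp: Vw_def)
  have finE: "finite (E \<inter> SN)" using bij_betw_finite[OF bij] finV by blast
  have sub: "set_pmf M \<subseteq> SN" unfolding M_def noise_def SN_def by (rule set_Pi_pmf_subset) simp
  have "measure_pmf.prob M E = measure_pmf.prob M (E \<inter> set_pmf M)" by (simp add: measure_Int_set_pmf)
  also have "E \<inter> set_pmf M = (E \<inter> SN) \<inter> set_pmf M" using sub by blast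
  also have "measure_pmf.prob M \<dots> = measure_pmf.prob M (E \<inter> SN)" by (simp add: measure_Int_set_pmf)
  also have "\<dots> = sum (pmf M) (E \<inter> SN)" by (rule measure_measure_pmf_finite[OF finE])
  also have "\<dots> = (\<Sum>v\<in>Vw. pmf M (Zf ops s v))" by (rule sum.reindex_bij_betw[OF bij, symmetric])
  finally show ?thesis by (simp add: M_def E_def Vw_def N_def)
qed

lemma pmf_noise_Zf:
  "pmf (noise (length ops) eps) (Zf ops s v) = (\<Prod>j<length ops. pmf (bernoulli_pmf eps) (Zf ops s v j))"
  unfolding noise_def by (rule pmf_Pi') (auto simp: Zf_def)


lemma gv_same:
  assumes "Inp l \<notin> set (snd (ops!j))"
  shows "gv ops (s(l := b)) v j = gv ops s v j"
  unfolding gv_def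
proof -
  have "map (eval_src (s(l := b)) v) (snd (ops!j)) = map (eval_src s v) (snd (ops!j))"
  proof (rule map_cong[OF refl])
    fix x assume "x \<in> set (snd (ops!j))"
    then have "x \<noteq> Inp l" using assms by blast
    then show "eval_src (s(l := b)) v x = eval_src s v x" by (cases x) auto
  qed
  then show "fst (ops ! j) (map (eval_src (s(l := b)) v) (snd (ops ! j))) =
    fst (ops ! j) (map (eval_src s v) (snd (ops ! j)))" by (rule arg_cong)
qed

lemma bern_bounds:
  assumes "0 < eps" "eps < 1/2"
  shows "eps \<le> pmf (bernoulli_pmf eps) b" "pmf (bernoulli_pmf eps) b \<le> 1 - eps"
  using assms by (cases b; simp)+

lemma term_compare:
  assumes e0: "0 < eps" and e1: "eps < 1/2"
  shows "(eps/(1-eps)) ^ card {j. j < length ops \<and> Inp l \<in> set (snd (ops!j))} *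
           pmf (noise (length ops) eps) (Zf ops s v)
         \<le> pmf (noise (length ops) eps) (Zf ops (s(l := b)) v)"
proof -
  define N where "N = length ops"
  define G where "G = {j. j < N \<and> Inp l \<in> set (snd (ops!j))}"
  define c where "c = eps/(1-eps)"
  define f where "f = (\<lambda>j. pmf (bernoulli_pmf eps) (Zf ops s v j))"
  define f' where "f' = (\<lambda>j. pmf (bernoulli_pmf eps) (Zf ops (s(l := b)) v j))"
  have c0: "0 \<le> c" "c \<le> 1" using e0 e1 by (auto simp: c_def field_simps)
  have Geq: "{j \<in> {..<N}. j \<in> G} = G" by (auto simp: G_def)
  have cG: "c ^ card G = (\<Prod>j<N. if j \<in> G then c else 1)"
    using prod.inter_filter[of "{..<N}" "\<lambda>_. c" "\<lambda>j. j \<in> G"] Geq by simp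
  have "c ^ card G * (\<Prod>j<N. f j) = (\<Prod>j<N. (if j \<in> G then c else 1) * f j)"
    by (simp add: cG prod.distrib)
  also have "\<dots> \<le> (\<Prod>j<N. f' j)"
  proof (rule prod_mono)
    fix j assume j: "j \<in> {..<N}"
    have fb: "eps \<le> f j" "f j \<le> 1 - eps" "eps \<le> f' j" "f' j \<le> 1 - eps"
      using bern_bounds[OF e0 e1] by (auto simp: f_def f'_def)
    show "0 \<le> (if j \<in> G then c else 1) * f j \<and> (if j \<in> G then c else 1) * f j \<le> f' j"
    proof (cases "j \<in> G")
      case True
      have "c * f j \<le> c * (1 - eps)" using fb c0 by (simp add: mult_left_mono)
      also have "\<dots> = eps" using e1 by (simp add: c_def)
      finally show ?thesis using True fb c0 e0 by simp
    next
      case False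
      then have "Inp l \<notin> set (snd (ops!j))" using j by (auto simp: G_def)
      then have "Zf ops (s(l := b)) v j = Zf ops s v j" by (simp add: Zf_def gv_same)
      then show ?thesis using False fb e0 by (simp add: f_def f'_def)
    qed
  qed
  finally show ?thesis
    by (simp add: pmf_noise_Zf f_def f'_def N_def G_def c_def)
qed

lemma prob_compare:
  assumes wf: "wf_ops L ops" and vo: "\<forall>x\<in>set outs. valid_out (length ops) x"
    and e0: "0 < eps" and e1: "eps < 1/2"
  shows "(eps/(1-eps)) ^ card {j. j < length ops \<and> Inp l \<in> set (snd (ops!j))} *
           measure_pmf.prob (noise (length ops) eps) {z. circuit_output ops outs s z = w}
         \<le> measure_pmf.prob (noise (length ops) eps) {z. circuit_output ops outs (s(l := b)) z = w}"
  unfolding prob_sum[OF wf vo] sum_distrib_left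
  by (rule sum_mono) (rule term_compare[OF e0 e1])


definition s_of :: "bool list \<Rightarrow> nat \<Rightarrow> bool" where
  "s_of xs i = (i < length xs \<and> xs ! i)"

lemma parity_symdiff:
  fixes X Y :: "nat set"
  assumes "finite X" "finite Y" "odd (card X) = odd (card Y)"
  shows "even (card ((X - Y) \<union> (Y - X)))"
proof -
  have a: "card X = card (X - Y) + card (X \<inter> Y)"
  proof -
    have "X = (X - Y) \<union> (X \<inter> Y)" by blast
    then have "card X = card ((X - Y) \<union> (X \<inter> Y))" by simp
    also have "\<dots> = card (X - Y) + card (X \<inter> Y)" using assms(1) by (intro card_Un_disjoint) auto
    finally show ?thesis .
  qed
  have b: "card Y = card (Y - X) + card (X \<inter> Y)"
  proof -
    have "Y = (Y - X) \<union> (X \<inter> Y)" by blast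
    then have "card Y = card ((Y - X) \<union> (X \<inter> Y))" by simp
    also have "\<dots> = card (Y - X) + card (X \<inter> Y)" using assms(2) by (intro card_Un_disjoint) auto
    finally show ?thesis .
  qed
  have c: "card ((X - Y) \<union> (Y - X)) = card (X - Y) + card (Y - X)"
    using assms(1,2) by (intro card_Un_disjoint) auto
  show ?thesis using a b c assms(3) by presburger
qed

lemma f2_inj:
  assumes fr: "f2_full_row_rank L K A" and lx: "length xs = L" and ly: "length ys = L"
    and eq: "f2_vecmat L K A (s_of xs) = f2_vecmat L K A (s_of ys)"
  shows "xs = ys"
proof (rule ccontr)
  assume ne: "xs \<noteq> ys"
  define S where "S = {l. l < L \<and> xs!l \<noteq> ys!l}"
  have "S \<noteq> {}"
  proof
    assume "S = {}"
    then have "\<forall>l<L. xs!l = ys!l" by (auto simp: S_def)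
    then have "xs = ys" using lx ly by (intro nth_equalityI) auto
    then show False using ne by simp
  qed
  moreover have "S \<subseteq> {..<L}" by (auto simp: S_def)
  ultimately obtain k where k: "k < K" "odd (card {l \<in> S. A l k})"
    using fr unfolding f2_full_row_rank_def by blast
  define X where "X = {l. l < L \<and> s_of xs l \<and> A l k}"
  define Y where "Y = {l. l < L \<and> s_of ys l \<and> A l k}"
  have "f2_vecmat L K A (s_of xs) ! k = f2_vecmat L K A (s_of ys) ! k" using eq by simp
  then have par: "odd (card X) = odd (card Y)" using k(1) by (simp add: f2_vecmat_def X_def Y_def)
  have "{l \<in> S. A l k} = (X - Y) \<union> (Y - X)"
    using lx ly by (auto simp: S_def X_def Y_def s_of_def)
  moreover have "even (card ((X - Y) \<union> (Y - X)))"
    by (rule parity_symdiff[OF _ _ par]) (auto simp: X_def Y_def)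
  ultimately show False using k(2) by simp
qed

lemma exists_bad:
  assumes fr: "f2_full_row_rank L K A" and NL: "N < L"
  shows "\<exists>xs. length xs = L \<and> f2_vecmat L K A (s_of xs) \<notin> outv outs ` {v. length v = N}"
proof (rule ccontr)
  assume "\<not> ?thesis"
  then have sub: "(\<lambda>xs. f2_vecmat L K A (s_of xs)) ` {xs. length xs = L} \<subseteq> outv outs ` {v. length v = N}"
    by blast
  have inj: "inj_on (\<lambda>xs. f2_vecmat L K A (s_of xs)) {xs. length xs = L}"
    using f2_inj[OF fr] by (auto simp: inj_on_def)
  have "(2::nat) ^ L = card ((\<lambda>xs. f2_vecmat L K A (s_of xs)) ` {xs. length xs = L})"
    using card_image[OF inj] card_lists[of L] by simp
  also have "\<dots> \<le> card (outv outs ` {v. length v = N})"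
    by (rule card_mono[OF _ sub]) (simp add: finite_lists)
  also have "\<dots> \<le> card {v :: bool list. length v = N}" by (rule card_image_le) (simp add: finite_lists)
  also have "\<dots> = 2 ^ N" by (rule card_lists)
  finally have "(2::nat) ^ L \<le> 2 ^ N" .
  then show False using NL by simp
qed

lemma card_Inp_le: "card {l. l < L \<and> Inp l \<in> set xs} \<le> length xs"
proof -
  have "card {l. l < L \<and> Inp l \<in> set xs} \<le> card (set xs)"
    by (rule card_inj_on_le[where f = Inp]) (auto simp: inj_on_def)
  also have "\<dots> \<le> length xs" by (rule card_length)
  finally show ?thesis .
qed

lemma exists_light:
  assumes L0: "0 < L" and lenD: "\<forall>j < N. length (snd (ops ! j)) \<le> D"
  shows "\<exists>l<L. card {j. j < N \<and> Inp l \<in> set (snd (ops!j))} * L \<le> N * D"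
proof (rule ccontr)
  assume "\<not> ?thesis"
  then have big: "\<forall>l<L. N * D < card {j. j < N \<and> Inp l \<in> set (snd (ops!j))} * L" by auto
  define P where "P = (\<lambda>l j. Inp l \<in> set (snd (ops!j)))"
  have cs: "card {j. j < N \<and> P l j} = (\<Sum>j<N. if P l j then 1 else 0)" for l
  proof -
    have "(\<Sum>j<N. if P l j then 1 else 0) = card {j \<in> {..<N}. P l j}"
      using sum.inter_filter[of "{..<N}" "\<lambda>_. 1::nat" "P l"] by simp
    also have "{j \<in> {..<N}. P l j} = {j. j < N \<and> P l j}" by auto
    finally show ?thesis by simp
  qed
  have cs2: "card {l. l < L \<and> P l j} = (\<Sum>l<L. if P l j then 1 else 0)" for j
  proof -
    have "(\<Sum>l<L. if P l j then 1 else 0) = card {l \<in> {..<L}. P l j}"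
      using sum.inter_filter[of "{..<L}" "\<lambda>_. 1::nat" "\<lambda>l. P l j"] by simp
    also have "{l \<in> {..<L}. P l j} = {l. l < L \<and> P l j}" by auto
    finally show ?thesis by simp
  qed
  have "(\<Sum>l<L. card {j. j < N \<and> P l j}) = (\<Sum>l<L. \<Sum>j<N. if P l j then 1 else 0)"
    by (simp add: cs)
  also have "\<dots> = (\<Sum>j<N. \<Sum>l<L. if P l j then 1 else 0)" by (rule sum.swap)
  also have "\<dots> = (\<Sum>j<N. card {l. l < L \<and> P l j})" by (simp add: cs2)
  also have "\<dots> \<le> (\<Sum>j<N. D)"
  proof (rule sum_mono)
    fix j assume "j \<in> {..<N}"
    then show "card {l. l < L \<and> P l j} \<le> D"
    proof -
      have "card {l. l < L \<and> P l j} \<le> length (snd (ops!j))"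
        unfolding P_def by (rule card_Inp_le)
      moreover have "length (snd (ops!j)) \<le> D" using lenD \<open>j \<in> {..<N}\<close> by simp
      ultimately show ?thesis by linarith
    qed
  qed
  finally have le: "(\<Sum>l<L. card {j. j < N \<and> P l j}) \<le> N * D" by simp
  have "(\<Sum>l<L. N * D) < (\<Sum>l<L. card {j. j < N \<and> P l j} * L)"
  proof (rule sum_strict_mono)
    show "finite {..<L}" by simp
    show "{..<L} \<noteq> {}" using L0 by auto
    fix l assume "l \<in> {..<L}"
    then show "N * D < card {j. j < N \<and> P l j} * L" using big unfolding P_def by blast
  qed
  also have "\<dots> = (\<Sum>l<L. card {j. j < N \<and> P l j}) * L" by (simp add: sum_distrib_right)
  also have "\<dots> \<le> N * D * L" using le by simp
  finally have "L * (N * D) < N * D * L" by simp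
  then show False by (simp add: mult.commute)
qed


theorem theorem4:
  fixes L K D :: nat and A :: "nat \<Rightarrow> nat \<Rightarrow> bool"
    and eps p_tar :: real and ops :: "operation list" and outs :: "src list"
  assumes "f2_full_row_rank L K A"
    and "0 \<le> eps" and "eps < 1/2"
    and "wf_circuit L K D ops outs"
    and "\<forall>s. block_error eps L K A ops outs s < p_tar"
  shows "real (length ops) / real K \<ge>
           real L * ln (1 / p_tar) / (real K * real D * ln (real D / eps))"
proof -
  note fr = assms(1) and e1 = assms(3)
  define N where "N = length ops"
  have wf: "wf_ops L ops" and vo: "\<forall>x\<in>set outs. valid_out (length ops) x"
    and lenD: "\<forall>j<N. length (snd (ops!j)) \<le> D"
    using assms(4) by (auto simp: wf_circuit_def wf_ops_def N_def)
  show ?thesis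
  proof (cases "eps = 0 \<or> D = 0 \<or> K = 0 \<or> L = 0")
    case True
    then show ?thesis by auto
  next
    case False
    then have e0: "0 < eps" and D1: "1 \<le> D" and K1: "1 \<le> K" and L1: "1 \<le> L"
      using assms(2) by auto
    have D2: "2 < real D / eps"
    proof -
      have "2 * eps < real D" using e1 D1 by linarith
      then show ?thesis using e0 by (simp add: field_simps)
    qed
    have epsD: "1 / eps \<le> real D / eps" using D1 e0 by (simp add: divide_right_mono)
    have ln2: "0 < ln (2::real)" by simp
    have lnD2: "ln 2 < ln (real D / eps)" using D2 by simp
    have lnDpos: "0 < ln (real D / eps)" using ln2 lnD2 by linarith
    define be where "be s = block_error eps L K A ops outs s" for s
    have be_lt: "be s < p_tar" for s using assms(5) by (simp add: be_def)
    have p0: "0 < p_tar"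
    proof -
      have "0 \<le> be (\<lambda>_. False)" by (simp add: be_def block_error_def)
      then show ?thesis using be_lt[of "\<lambda>_. False"] by linarith
    qed
    have key: "real L * ln (1 / p_tar) \<le> real D * real N * ln (real D / eps)"
    proof (cases "1 \<le> p_tar")
      case True
      then have "ln (1 / p_tar) \<le> 0" using p0 by (simp add: ln_div)
      then have "real L * ln (1 / p_tar) \<le> 0" by (simp add: mult_nonneg_nonpos)
      also have "0 \<le> real D * real N * ln (real D / eps)" using lnDpos by simp
      finally show ?thesis .
    next
      case False
      then have p1: "p_tar < 1" by simp
      have NL: "L \<le> N"
      proof (rule ccontr)
        assume "\<not> L \<le> N"
        then have "N < L" by simp
        then obtain xs where xs: "length xs = L"
          "f2_vecmat L K A (s_of xs) \<notin> outv outs ` {v. length v = N}"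
          using exists_bad[OF fr] by blast
        have "{z. circuit_output ops outs (s_of xs) z \<noteq> f2_vecmat L K A (s_of xs)} = UNIV"
        proof -
          have "circuit_output ops outs (s_of xs) z \<noteq> f2_vecmat L K A (s_of xs)" for z
          proof -
            have "circuit_output ops outs (s_of xs) z = outv outs (run_ops (s_of xs) z ops)"
              by (rule co_outv[OF vo])
            moreover have "run_ops (s_of xs) z ops \<in> {v. length v = N}"
              by (simp add: length_run N_def)
            ultimately have "circuit_output ops outs (s_of xs) z \<in> outv outs ` {v. length v = N}"
              by (simp only: image_eqI)
            then show ?thesis using xs(2) by auto
          qed
          then show ?thesis by blast
        qed
        then have "be (s_of xs) = 1"
          by (simp add: be_def block_error_def measure_pmf.prob_space)
        then show False using be_lt[of "s_of xs"] p1 by simp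
      qed
      obtain l where l: "l < L" "card {j. j < N \<and> Inp l \<in> set (snd (ops!j))} * L \<le> N * D"
        using exists_light[of L N ops D] L1 lenD by auto
      define m where "m = card {j. j < N \<and> Inp l \<in> set (snd (ops!j))}"
      define c where "c = eps / (1 - eps)"
      have c0: "0 \<le> c" using e0 e1 by (simp add: c_def)
      define s0 :: "nat \<Rightarrow> bool" where "s0 = (\<lambda>_. False)"
      define r0 where "r0 = f2_vecmat L K A s0"
      define r1 where "r1 = f2_vecmat L K A (s0(l := True))"
      have rne: "r0 \<noteq> r1"
      proof -
        obtain k where k: "k < K" "odd (card {l' \<in> {l}. A l' k})"
          using fr l(1) unfolding f2_full_row_rank_def by (metis empty_not_insert insert_subset lessThan_iff empty_subsetI)
        have Alk: "A l k"
        proof (rule ccontr)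
          assume "\<not> A l k"
          then have e: "{l' \<in> {l}. A l' k} = {}" by auto
          show False using k(2) e by (metis card.empty dvd_0_right)
        qed
        have "r0 ! k = False" using k(1) by (simp add: r0_def f2_vecmat_def s0_def)
        moreover have "{l'. l' < L \<and> (s0(l := True)) l' \<and> A l' k} = {l}"
          using l(1) Alk by (auto simp: s0_def)
        then have "r1 ! k = True" using k(1) by (simp add: r1_def f2_vecmat_def)
        ultimately show ?thesis by auto
      qed
      let ?M = "noise (length ops) eps"
      have P1: "measure_pmf.prob ?M {z. circuit_output ops outs (s0(l := True)) z = r0} \<le> be (s0(l := True))"
        unfolding be_def block_error_def r1_def[symmetric]
        by (rule measure_pmf.finite_measure_mono) (use rne in auto)
      have P0: "measure_pmf.prob ?M {z. circuit_output ops outs s0 z = r0} = 1 - be s0"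
      proof -
        have "{z. circuit_output ops outs s0 z = r0} = UNIV - {z. circuit_output ops outs s0 z \<noteq> r0}" by auto
        then show ?thesis
          using measure_pmf.prob_compl[of "{z. circuit_output ops outs s0 z \<noteq> r0}" ?M]
          by (simp add: be_def block_error_def r0_def)
      qed
      have cmp: "c ^ m * measure_pmf.prob ?M {z. circuit_output ops outs s0 z = r0}
          \<le> measure_pmf.prob ?M {z. circuit_output ops outs (s0(l := True)) z = r0}"
        unfolding c_def m_def N_def by (rule prob_compare[OF wf vo e0 e1])
      have "c ^ m * (1 - p_tar) \<le> c ^ m * (1 - be s0)"
        using be_lt[of s0] c0 by (intro mult_left_mono) auto
      also have "\<dots> \<le> be (s0(l := True))" using P0 P1 cmp by simp
      also have "\<dots> < p_tar" by (rule be_lt)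
      finally have main: "c ^ m * (1 - p_tar) < p_tar" .
      have lnp: "ln (1 / p_tar) = - ln p_tar" using p0 by (simp add: ln_div)
      have mLreal: "real m * real L \<le> real N * real D"
        using l(2) unfolding m_def by (metis of_nat_le_iff of_nat_mult)
      show ?thesis
      proof (cases "m = 0")
        case True
        then have "1/2 < p_tar" using main by simp
        then have "ln (1/2) < ln p_tar" using p0 by simp
        then have a: "ln (1 / p_tar) < ln 2" using lnp by (simp add: ln_div)
        have "real L * ln (1 / p_tar) \<le> real L * ln 2" using a L1 by simp
        also have "\<dots> \<le> real N * ln 2" using NL ln2 by (simp add: mult_right_mono)
        also have "\<dots> \<le> real N * ln (real D / eps)" using lnD2 by (simp add: mult_left_mono)
        also have "\<dots> \<le> real D * real N * ln (real D / eps)"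
        proof -
          have "0 \<le> real N * ln (real D / eps)" using lnDpos by simp
          then have "1 * (real N * ln (real D / eps)) \<le> real D * (real N * ln (real D / eps))"
            using D1 by (intro mult_right_mono) auto
          then show ?thesis by (simp add: mult.assoc)
        qed
        finally show ?thesis .
      next
        case False
        then have m1: "1 \<le> m" by simp
        have q0: "0 < (1 - eps) ^ m" using e1 by simp
        have "c ^ m = eps ^ m / (1 - eps) ^ m" by (simp add: c_def power_divide)
        then have "eps ^ m * (1 - p_tar) < p_tar * (1 - eps) ^ m"
          using main q0 by (simp add: field_simps)
        then have b: "eps ^ m < p_tar * ((1 - eps) ^ m + eps ^ m)" by (simp add: algebra_simps)
        have "(1 - eps) ^ m \<le> (1 - eps) ^ 1"
          by (rule power_decreasing) (use m1 e0 e1 in auto)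
        moreover have "eps ^ m \<le> eps ^ 1"
          by (rule power_decreasing) (use m1 e0 e1 in auto)
        ultimately have "(1 - eps) ^ m + eps ^ m \<le> 1" by simp
        then have "p_tar * ((1 - eps) ^ m + eps ^ m) \<le> p_tar" using p0 by (simp add: mult_left_le)
        then have "eps ^ m < p_tar" using b by linarith
        then have "ln (eps ^ m) < ln p_tar"
          using ln_less_cancel_iff[of "eps ^ m" p_tar] e0 p0 by (metis zero_less_power)
        then have "real m * ln eps < ln p_tar" using e0 by (simp add: ln_realpow)
        then have a: "ln (1 / p_tar) < real m * ln (1 / eps)" using lnp e0 by (simp add: ln_div)
        have lne: "0 < ln (1 / eps)" using e0 e1 by simp
        have "real L * ln (1 / p_tar) \<le> real L * (real m * ln (1 / eps))"
          using a L1 by simp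
        also have "\<dots> = (real m * real L) * ln (1 / eps)" by simp
        also have "\<dots> \<le> (real N * real D) * ln (1 / eps)" using mLreal lne by (simp add: mult_right_mono)
        also have "\<dots> \<le> (real N * real D) * ln (real D / eps)"
        proof (rule mult_left_mono)
          show "ln (1 / eps) \<le> ln (real D / eps)" using epsD e0 D2 by (subst ln_le_cancel_iff) auto
          show "0 \<le> real N * real D" by simp
        qed
        finally show ?thesis by (simp add: mult_ac)
      qed
    qed
    have "real L * ln (1 / p_tar) / (real K * real D * ln (real D / eps))
        \<le> real D * real N * ln (real D / eps) / (real K * real D * ln (real D / eps))"
      using key K1 D1 lnDpos by (intro divide_right_mono) auto
    also have "\<dots> = real N / real K" using D1 lnDpos by (simp add: field_simps)
    finally show ?thesis by (simp add: N_def)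
  qed
qed

end
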